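(* Let $\mathcal{V}$ be a convex open subset of a Banach space $\mathcal{Y}$, $f:\mathcal{V}\to\mathbb{R}$ a function, and $F:[0,+\infty)\to[0,+\infty)$ a non-decreasing locally Lipschitz function. Fix $x_0\in\mathcal{V}$ and let $s:[0,R)\to\mathbb{R}$, with $R<\infty$, be a solution of $s'=F(s)$, $s(0)=|f(x_0)|$. If $|D|f(x)\le F(|f(x)|)$ for all $x\in\mathcal{V}$, then $|f(x)|\le s(\|x-x_0\|)$ for all $x\in\mathcal{V}\cap B(x_0,R)$.
   Context: For $f:\mathcal{Y}\supset\mathcal{V}\to\mathbb{R}$, the metric derivative (pointwise Lipschitz constant) is $|D|f(x):=\limsup_{r\to0}\sup_{y\in B(x,r)}\frac{|f(x)-f(y)|}{\|x-y\|}$. *)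

theory Defs
  imports "HOL-Analysis.Analysis"
begin

text \<open>Metric derivative (pointwise Lipschitz constant) of f : V -> R at x,
  limsup_{r->0+} sup_{y in B(x,r) within V} |f x - f y| / norm (x - y), valued in the extended reals.
  (The term y = x contributes 0 by the convention x / 0 = 0.)\<close>
definition metric_deriv :: "'a::real_normed_vector set \<Rightarrow> ('a \<Rightarrow> real) \<Rightarrow> 'a \<Rightarrow> ereal" where
  "metric_deriv V f x =
     Limsup (at_right 0) (\<lambda>r. SUP y\<in>ball x r \<inter> V. ereal (\<bar>f x - f y\<bar> / norm (x - y)))"

end

theory Submission
  imports Defs
begin

lemma md_bound:
  fixes f :: "'a::real_normed_vector \<Rightarrow> real"
  assumes "metric_deriv V f x \<le> ereal c" "\<eta> > 0"
  shows "\<exists>r>0. \<forall>y\<in>ball x r \<inter> V. \<bar>f x - f y\<bar> \<le> (c+\<eta>) * norm (x-y)"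
proof -
  have "Limsup (at_right 0) (\<lambda>r. SUP y\<in>ball x r \<inter> V. ereal (\<bar>f x - f y\<bar> / norm (x - y))) < ereal (c+\<eta>)"
    using assms unfolding metric_deriv_def by (simp add: le_less_trans)
  then have "eventually (\<lambda>r. (SUP y\<in>ball x r \<inter> V. ereal (\<bar>f x - f y\<bar> / norm (x - y))) < ereal (c+\<eta>)) (at_right 0)"
    by (rule Limsup_lessD)
  then obtain b where b: "b > 0" and hb: "\<forall>r>0. r < b \<longrightarrow> (SUP y\<in>ball x r \<inter> V. ereal (\<bar>f x - f y\<bar> / norm (x - y))) < ereal (c+\<eta>)"
    by (auto simp: eventually_at_right_field)
  have S: "(SUP y\<in>ball x (b/2) \<inter> V. ereal (\<bar>f x - f y\<bar> / norm (x - y))) < ereal (c+\<eta>)"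
    using hb b by auto
  have "\<forall>y\<in>ball x (b/2) \<inter> V. \<bar>f x - f y\<bar> \<le> (c+\<eta>) * norm (x-y)"
  proof
    fix y assume y: "y \<in> ball x (b/2) \<inter> V"
    have "ereal (\<bar>f x - f y\<bar> / norm (x - y)) \<le> (SUP y\<in>ball x (b/2) \<inter> V. ereal (\<bar>f x - f y\<bar> / norm (x - y)))"
      using y by (rule SUP_upper)
    then have "ereal (\<bar>f x - f y\<bar> / norm (x - y)) < ereal (c + \<eta>)" using S by (rule le_less_trans)
    then have q: "\<bar>f x - f y\<bar> / norm (x - y) < c + \<eta>" by simp
    show "\<bar>f x - f y\<bar> \<le> (c+\<eta>) * norm (x-y)"
    proof (cases "x = y")
      case True then show ?thesis by simp
    next
      case False
      then have "norm (x-y) > 0" by simp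
      with q show ?thesis by (simp add: divide_less_eq less_imp_le)
    qed
  qed
  then show ?thesis using b by (intro exI[of _ "b/2"]) auto
qed

theorem proposition3p1:
  fixes V :: "'a::banach set" and f :: "'a \<Rightarrow> real" and F :: "real \<Rightarrow> real"
    and s :: "real \<Rightarrow> real" and R :: real and x0 :: 'a
  assumes "convex V" and "open V"
    and F_nonneg: "\<forall>t\<ge>0. F t \<ge> 0"
    and F_mono: "mono_on {0..} F"
    and F_loclip: "\<forall>t\<ge>0. \<exists>u>0. \<exists>L. L-lipschitz_on (cball t u \<inter> {0..}) F"
    and "x0 \<in> V"
    and "0 < R"
    and s_nonneg: "\<forall>t\<in>{0..<R}. s t \<ge> 0"
    and s_ode: "\<forall>t\<in>{0..<R}. (s has_real_derivative F (s t)) (at t within {0..<R})"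
    and s_init: "s 0 = \<bar>f x0\<bar>"
    and bound: "\<forall>x\<in>V. metric_deriv V f x \<le> ereal (F \<bar>f x\<bar>)"
  shows "\<forall>x\<in>V \<inter> ball x0 R. \<bar>f x\<bar> \<le> s (norm (x - x0))"
proof (intro ballI)
  have A: "\<And>y \<eta>. y \<in> V \<Longrightarrow> \<eta> > 0 \<Longrightarrow> \<exists>r>0. \<forall>z\<in>ball y r \<inter> V. \<bar>f y - f z\<bar> \<le> (F \<bar>f y\<bar> + \<eta>) * norm (y-z)"
    using bound md_bound by blast
  have cf: "continuous_on V f"
    unfolding continuous_on_iff
  proof (intro ballI allI impI)
    fix y e assume y: "y \<in> V" and e: "(0::real) < e"
    define C where "C = F \<bar>f y\<bar> + 1"
    have C: "C > 0" using F_nonneg by (simp add: C_def add_nonneg_pos)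
    obtain r where r: "r > 0" "\<forall>z\<in>ball y r \<inter> V. \<bar>f y - f z\<bar> \<le> C * norm (y-z)"
      using A[OF y, of 1] unfolding C_def by auto
    show "\<exists>d>0. \<forall>x'\<in>V. dist x' y < d \<longrightarrow> dist (f x') (f y) < e"
    proof (intro exI[of _ "min r (e/C)"] conjI ballI impI)
      show "0 < min r (e/C)" using r C e by simp
      fix z assume z: "z \<in> V" "dist z y < min r (e/C)"
      then have "\<bar>f y - f z\<bar> \<le> C * norm (y-z)" using r by (auto simp: dist_commute)
      also have "C * norm (y - z) < C * (e/C)"
        using z C by (intro mult_strict_left_mono) (auto simp: dist_norm norm_minus_commute)
      also have "\<dots> = e" using C by simp
      finally show "dist (f z) (f y) < e" by (simp add: dist_real_def abs_minus_commute)
    qed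
  qed
  fix x assume x: "x \<in> V \<inter> ball x0 R"
  show "\<bar>f x\<bar> \<le> s (norm (x - x0))"
  proof (cases "x = x0")
    case True then show ?thesis by (simp add: s_init)
  next
    case False
    define d where "d = norm (x-x0)"
    have d0: "d > 0" using False by (simp add: d_def)
    have dR: "d < R" using x by (simp add: d_def dist_norm norm_minus_commute)
    define p where "p = (\<lambda>t. x0 + (t/d) *\<^sub>R (x - x0))"
    have pV: "p t \<in> V" if "t \<in> {0..d}" for t
    proof -
      have "p t = (1 - t/d) *\<^sub>R x0 + (t/d) *\<^sub>R x"
        by (simp add: p_def algebra_simps)
      moreover have "(1 - t/d) *\<^sub>R x0 + (t/d) *\<^sub>R x \<in> V"
        using \<open>convex V\<close> \<open>x0 \<in> V\<close> x that d0 unfolding convex_def by auto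
      ultimately show ?thesis by simp
    qed
    have pdist: "norm (p t - p t') = \<bar>t - t'\<bar>" for t t'
    proof -
      have "p t - p t' = ((t - t')/d) *\<^sub>R (x - x0)" by (simp add: p_def algebra_simps diff_divide_distrib)
      then show ?thesis using d0 by (simp add: d_def[symmetric])
    qed
    have pd: "p d = x" using d0 by (simp add: p_def)
    have p0: "p 0 = x0" by (simp add: p_def)
    define \<phi> where "\<phi> = (\<lambda>t. \<bar>f (p t)\<bar>)"
    define w where "w = (\<lambda>t. \<phi> t - s t)"
    show "\<bar>f x\<bar> \<le> s (norm (x - x0))"
    proof (rule ccontr)
      assume "\<not> ?thesis"
      then have wd: "w d > 0" unfolding w_def \<phi>_def using pd d_def by simp
      have w0: "w 0 = 0" by (simp add: w_def \<phi>_def p0 s_init)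
      have cp: "continuous_on {0..d} p" unfolding p_def using d0 by (intro continuous_intros) auto
      have cphi: "continuous_on {0..d} \<phi>"
        unfolding \<phi>_def
        by (intro continuous_intros continuous_on_compose2[OF cf cp]) (use pV in auto)
      have cs: "continuous_on {0..d} s"
      proof -
        have "continuous (at t within {0..d}) s" if "t \<in> {0..d}" for t
        proof -
          have "(s has_real_derivative F (s t)) (at t within {0..<R})" using s_ode that dR by auto
          then have "(s has_real_derivative F (s t)) (at t within {0..d})"
            by (rule has_field_derivative_subset) (use dR in auto)
          then show ?thesis by (rule DERIV_continuous)
        qed
        then show ?thesis by (simp add: continuous_on_eq_continuous_within)
      qed
      have cw: "continuous_on {0..d} w" unfolding w_def by (intro continuous_intros cphi cs)
      define S where "S = {0..d} \<inter> w -` {..0}"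
      have "closed S" unfolding S_def by (intro continuous_closed_preimage cw) auto
      moreover have "bounded S" unfolding S_def by (rule bounded_subset[of "{0..d}"]) auto
      ultimately have "compact S" by (simp add: compact_eq_bounded_closed)
      moreover have "0 \<in> S" using d0 w0 by (simp add: S_def)
      ultimately obtain a where aS: "a \<in> S" and amax: "\<forall>t\<in>S. t \<le> a"
        using compact_attains_sup by blast
      have a0: "0 \<le> a" and ad: "a \<le> d" and wa: "w a \<le> 0" using aS by (auto simp: S_def)
      have ad': "a < d" using ad wa wd by (cases "a = d") auto
      have wa0: "w a = 0"
      proof -
        have "continuous_on {a..d} w" using cw by (rule continuous_on_subset) (use a0 in auto)
        then obtain c where c: "a \<le> c" "c \<le> d" "w c = 0" using IVT'[of w a 0 d] wa wd ad by auto
        then have "c \<in> S" using a0 by (simp add: S_def)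
        then show ?thesis using c amax wa by (metis order_antisym)
      qed
      have pos: "w t > 0" if "a < t" "t \<le> d" for t
      proof (rule ccontr)
        assume "\<not> w t > 0"
        then have "t \<in> S" using that a0 by (simp add: S_def)
        then show False using amax that by force
      qed
      define \<sigma> where "\<sigma> = s a"
      have phia: "\<phi> a = \<sigma>" using wa0 by (simp add: w_def \<sigma>_def)
      have \<sigma>0: "\<sigma> \<ge> 0" using phia by (simp add: \<phi>_def)
      obtain u L0 where u: "u > 0" and L0: "L0-lipschitz_on (cball \<sigma> u \<inter> {0..}) F"
        using F_loclip \<sigma>0 by blast
      define L where "L = L0 + 1"
      have L0n: "L0 \<ge> 0" using L0 by (rule lipschitz_on_nonneg)
      have Lpos: "L > 0" using L0n by (simp add: L_def)
      have Llip: "L-lipschitz_on (cball \<sigma> u \<inter> {0..}) F"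
        using L0 by (rule lipschitz_on_mono) (auto simp: L_def)
      obtain \<delta>1 where \<delta>1: "\<delta>1 > 0" "\<forall>t\<in>{0..d}. dist t a < \<delta>1 \<longrightarrow> dist (\<phi> t) (\<phi> a) < u"
        using cphi a0 ad u unfolding continuous_on_iff by (meson atLeastAtMost_iff)
      obtain \<delta>2 where \<delta>2: "\<delta>2 > 0" "\<forall>t\<in>{0..d}. dist t a < \<delta>2 \<longrightarrow> dist (s t) (s a) < u"
        using cs a0 ad u unfolding continuous_on_iff by (meson atLeastAtMost_iff)
      define t2 where "t2 = min d (a + min (min \<delta>1 \<delta>2 / 2) (1/(4*L)))"
      have t2a: "a < t2" using ad' \<delta>1 \<delta>2 Lpos by (simp add: t2_def)
      have t2d: "t2 \<le> d" by (simp add: t2_def)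
      have t2\<delta>: "t2 - a < \<delta>1" "t2 - a < \<delta>2" using \<delta>1 \<delta>2 by (auto simp: t2_def)
      have t2L: "4 * L * (t2 - a) \<le> 1"
      proof -
        have "t2 - a \<le> 1/(4*L)" by (simp add: t2_def)
        then show ?thesis using Lpos by (simp add: field_simps)
      qed
      define h where "h = (\<lambda>t. w t / (1 + 4*L*(t-a)))"
      have hc: "continuous_on {a..t2} h" unfolding h_def
      proof (intro continuous_intros)
        show "continuous_on {a..t2} w" using cw by (rule continuous_on_subset) (use a0 t2d in auto)
        show "\<forall>t\<in>{a..t2}. 1 + 4 * L * (t - a) \<noteq> 0" using Lpos
          by (smt (verit) atLeastAtMost_iff mult_nonneg_nonneg)
      qed
      obtain \<tau> where \<tau>: "\<tau> \<in> {a..t2}" and \<tau>max: "\<forall>t\<in>{a..t2}. h t \<le> h \<tau>"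
        using continuous_attains_sup[OF compact_Icc _ hc] t2a by auto
      have Dpos: "1 + 4*L*(t-a) > 0" if "a \<le> t" for t using Lpos that by (intro add_pos_nonneg) auto
      have "h t2 > 0" using pos[OF t2a t2d] Dpos[of t2] t2a by (simp add: h_def)
      then have "h \<tau> > 0" using \<tau>max[rule_format, of t2] t2a by simp
      then have w\<tau>: "w \<tau> > 0" using Dpos[of \<tau>] \<tau> by (simp add: h_def zero_less_divide_iff)
      have a\<tau>: "a < \<tau>" using \<tau> w\<tau> wa0 by (cases "\<tau> = a") auto
      have \<tau>d: "\<tau> \<le> d" "0 \<le> \<tau>" using \<tau> t2d a0 by auto
      have \<tau>R: "\<tau> \<in> {0..<R}" using \<tau>d dR by auto
      have phi\<tau>: "\<phi> \<tau> \<in> cball \<sigma> u \<inter> {0..}"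
        using \<delta>1(2)[rule_format, of \<tau>] \<tau> \<tau>d t2\<delta> phia
        by (auto simp: dist_real_def \<phi>_def abs_minus_commute)
      have s\<tau>: "s \<tau> \<in> cball \<sigma> u \<inter> {0..}"
        using \<delta>2(2)[rule_format, of \<tau>] \<tau> \<tau>d t2\<delta> s_nonneg \<tau>R
        by (auto simp: dist_real_def \<sigma>_def abs_minus_commute)
      have Fdiff: "F (\<phi> \<tau>) - F (s \<tau>) \<le> L * w \<tau>"
      proof -
        have "dist (F (\<phi> \<tau>)) (F (s \<tau>)) \<le> L * dist (\<phi> \<tau>) (s \<tau>)"
          using lipschitz_onD[OF Llip phi\<tau> s\<tau>] .
        then show ?thesis using w\<tau> by (simp add: dist_real_def w_def)
      qed
      define \<eta> where "\<eta> = L * w \<tau> / 4"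
      have \<eta>: "\<eta> > 0" using Lpos w\<tau> by (simp add: \<eta>_def)
      obtain r1 where r1: "r1 > 0" "\<forall>z\<in>ball (p \<tau>) r1 \<inter> V. \<bar>f (p \<tau>) - f z\<bar> \<le> (F \<bar>f (p \<tau>)\<bar> + \<eta>) * norm (p \<tau> - z)"
        using A[OF pV \<eta>, of \<tau>] \<tau>d by auto
      have "((\<lambda>y. (s y - s \<tau>) / (y - \<tau>)) \<longlongrightarrow> F (s \<tau>)) (at \<tau> within {0..<R})"
        using s_ode \<tau>R by (simp add: has_field_derivative_iff)
      then have "eventually (\<lambda>y. dist ((s y - s \<tau>) / (y - \<tau>)) (F (s \<tau>)) < \<eta>) (at \<tau> within {0..<R})"
        using \<eta> by (simp add: tendsto_iff)
      then obtain r2 where r2: "r2 > 0" "\<forall>y\<in>{0..<R}. y \<noteq> \<tau> \<and> dist y \<tau> < r2 \<longrightarrow> dist ((s y - s \<tau>) / (y - \<tau>)) (F (s \<tau>)) < \<eta>"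
        by (auto simp: eventually_at)
      define t' where "t' = \<tau> - min (min r1 r2) (\<tau> - a) / 2"
      have t'a: "a < t'" and t'\<tau>: "t' < \<tau>" and t'r: "\<tau> - t' < r1" "\<tau> - t' < r2"
        using a\<tau> r1(1) r2(1) unfolding t'_def by (auto simp add: min_def field_simps)
      have t'0: "0 \<le> t'" using t'a a0 by simp
      have "\<bar>f (p \<tau>) - f (p t')\<bar> \<le> (F \<bar>f (p \<tau>)\<bar> + \<eta>) * norm (p \<tau> - p t')"
      proof -
        have "p t' \<in> ball (p \<tau>) r1 \<inter> V" using pV[of t'] t'0 t'\<tau> \<tau>d t'r by (simp add: dist_norm pdist)
        then show ?thesis using r1(2) by blast
      qed
      then have e1: "\<phi> \<tau> - \<phi> t' \<le> (F (\<phi> \<tau>) + \<eta>) * (\<tau> - t')"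
      proof -
        have "\<bar>\<bar>f (p \<tau>)\<bar> - \<bar>f (p t')\<bar>\<bar> \<le> \<bar>f (p \<tau>) - f (p t')\<bar>" by (rule abs_triangle_ineq3)
        moreover have "norm (p \<tau> - p t') = \<tau> - t'" using t'\<tau> by (simp add: pdist)
        moreover note \<open>\<bar>f (p \<tau>) - f (p t')\<bar> \<le> _\<close>
        ultimately have "\<bar>\<bar>f (p \<tau>)\<bar> - \<bar>f (p t')\<bar>\<bar> \<le> (F \<bar>f (p \<tau>)\<bar> + \<eta>) * (\<tau> - t')" by simp
        then show ?thesis unfolding \<phi>_def by linarith
      qed
      have "dist ((s t' - s \<tau>) / (t' - \<tau>)) (F (s \<tau>)) < \<eta>"
        using r2(2) t'0 t'\<tau> \<tau>R t'r by (auto simp: dist_real_def)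
      then have q: "(s \<tau> - s t') / (\<tau> - t') > F (s \<tau>) - \<eta>"
      proof -
        have "(s t' - s \<tau>) / (t' - \<tau>) = (s \<tau> - s t') / (\<tau> - t')" by (metis minus_diff_eq minus_divide_divide)
        then show ?thesis using \<open>dist _ _ < \<eta>\<close> by (simp add: dist_real_def abs_less_iff)
      qed
      have e2: "s \<tau> - s t' \<ge> (F (s \<tau>) - \<eta>) * (\<tau> - t')"
        using q t'\<tau> by (simp add: less_divide_eq less_imp_le)
      have e3: "w \<tau> - w t' \<ge> 2 * L * w \<tau> * (\<tau> - t')"
      proof -
        define D1 where "D1 = 1 + 4*L*(t'-a)"
        define D where "D = 1 + 4*L*(\<tau>-a)"
        have D1p: "D1 > 0" using Dpos[of t'] t'a by (simp add: D1_def)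
        have Dp: "D > 0" using Dpos[of \<tau>] a\<tau> by (simp add: D_def)
        have D2: "D \<le> 2"
        proof -
          have "4*L*(\<tau>-a) \<le> 4*L*(t2-a)" using \<tau> Lpos by simp
          then show ?thesis using t2L by (simp add: D_def)
        qed
        have "h t' \<le> h \<tau>" using \<tau>max t'a t'\<tau> \<tau> by auto
        then have "w t' / D1 \<le> w \<tau> / D" by (simp add: h_def D1_def D_def)
        then have i1: "w t' * D \<le> w \<tau> * D1" using D1p Dp by (simp add: divide_simps)
        have "D - D1 = 4*L*(\<tau>-t')" by (simp add: D_def D1_def algebra_simps)
        then have "w \<tau> * (D - D1) = 4*L*w \<tau>*(\<tau>-t')" by (simp only: mult_ac)
        moreover have "(w \<tau> - w t') * D \<ge> w \<tau> * (D - D1)" using i1 by (simp add: algebra_simps)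
        ultimately have i2: "(w \<tau> - w t') * D \<ge> 4*L*w \<tau>*(\<tau>-t')" by linarith
        have nn: "4*L*w \<tau>*(\<tau>-t') \<ge> 0" using Lpos w\<tau> t'\<tau> by simp
        then have "(w \<tau> - w t') * D \<ge> 0" using i2 by linarith
        then have "w \<tau> - w t' \<ge> 0" using Dp by (simp add: zero_le_mult_iff)
        then have "(w \<tau> - w t') * D \<le> (w \<tau> - w t') * 2" using D2 by (intro mult_left_mono)
        then show ?thesis using i2 by simp
      qed
      have "w \<tau> - w t' \<le> (L * w \<tau> + 2*\<eta>) * (\<tau> - t')"
      proof -
        have "w \<tau> - w t' = (\<phi> \<tau> - \<phi> t') - (s \<tau> - s t')" by (simp add: w_def)
        also have "\<dots> \<le> (F (\<phi> \<tau>) + \<eta>) * (\<tau> - t') - (F (s \<tau>) - \<eta>) * (\<tau> - t')" using e1 e2 by simp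
        also have "\<dots> = (F (\<phi> \<tau>) - F (s \<tau>) + 2*\<eta>) * (\<tau> - t')" by (simp add: algebra_simps)
        also have "\<dots> \<le> (L * w \<tau> + 2*\<eta>) * (\<tau> - t')" using Fdiff t'\<tau> by (intro mult_right_mono) auto
        finally show ?thesis .
      qed
      with e3 have "2 * L * w \<tau> * (\<tau> - t') \<le> (L * w \<tau> + 2*\<eta>) * (\<tau> - t')" by simp
      then have "2 * L * w \<tau> \<le> L * w \<tau> + 2*\<eta>" using t'\<tau> by (simp add: mult.assoc)
      then show False using Lpos w\<tau> by (simp add: \<eta>_def)
    qed
  qed
qed

end
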